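(* Let $q,q',n$ be integers with $q'\ge 2q+1$, $q>1$ and $n>1$. Let $S$ be an $\mathcal{OS}_q(n)$ of period $m$ with ring sequence $[s_0,\ldots,s_{m-1}]$ where $s_0=0$. For $x\in\mathbb{Z}_q$ let $x'$ denote the class in $\mathbb{Z}_{q'}$ of the integer in $\{0,\ldots,q-1\}$ representing $x$. Define $t_i=(-1)^{i+m-1}s_i'$ if $s_i'\neq0$ and $t_i=(-1)^{i+m-1}q$ if $s_i'=0$ ($0\le i\le m-1$). Let $U$ be the periodic sequence over $\mathbb{Z}_{q'}$ with ring sequence \[[s_0',\ldots,s_{m-1}',\,-s_0',\ldots,-s_{m-1}',\,t_0,\ldots,t_{m-1},\,-t_0,\ldots,-t_{m-1}].\] Then $U$ is an $\mathcal{SOS}_{q'}(n)$ of period $4m$ with $w_{q'}(U)=0$.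
   Context: For a periodic sequence $S=(s_i)$ write $\mathbf{s}_n(i)=(s_i,\ldots,s_{i+n-1})$; $\mathbf{u}^R$ is the reverse of a tuple and $-\mathbf{u}$ its termwise negative. An $n$-window sequence of period $m$ satisfies $\mathbf{s}_n(i)=\mathbf{s}_n(j)\Rightarrow i\equiv j\pmod m$. An $\mathcal{OS}_q(n)$ is a $q$-ary $n$-window sequence with $\mathbf{s}_n(i)\neq\mathbf{s}_n(j)^R$ for all $i,j$; an $\mathcal{SOS}_q(n)$ is an $\mathcal{OS}_q(n)$ with also $\mathbf{s}_n(i)\neq-\mathbf{s}_n(j)^R$ for all $i,j$. The ring sequence of a sequence of period $m$ is one period. The weight $w(U)$ is the integer sum of one period with terms taken in $\{0,\ldots,q'-1\}$; $w_{q'}(U)=w(U)\bmod q'$. *)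

theory Defs
  imports Main
begin

text \<open>A q-ary periodic sequence is a function nat => int with values in {0..q-1}
  (representatives of Z_q). Negation in Z_q is (-x) mod q.\<close>

definition window :: "(nat \<Rightarrow> int) \<Rightarrow> nat \<Rightarrow> nat \<Rightarrow> int list" where
  "window s n i = map (\<lambda>k. s (i + k)) [0..<n]"

definition periodic :: "(nat \<Rightarrow> int) \<Rightarrow> nat \<Rightarrow> bool" where
  "periodic s m \<longleftrightarrow> m > 0 \<and> (\<forall>i. s (i + m) = s i)"

definition q_ary :: "int \<Rightarrow> (nat \<Rightarrow> int) \<Rightarrow> bool" where
  "q_ary q s \<longleftrightarrow> (\<forall>i. 0 \<le> s i \<and> s i < q)"

definition window_seq :: "nat \<Rightarrow> nat \<Rightarrow> (nat \<Rightarrow> int) \<Rightarrow> bool" where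
  "window_seq n m s \<longleftrightarrow> periodic s m \<and>
     (\<forall>i j. window s n i = window s n j \<longrightarrow> i mod m = j mod m)"

definition neg_tuple :: "int \<Rightarrow> int list \<Rightarrow> int list" where
  "neg_tuple q u = map (\<lambda>x. (- x) mod q) u"

definition is_OS :: "int \<Rightarrow> nat \<Rightarrow> nat \<Rightarrow> (nat \<Rightarrow> int) \<Rightarrow> bool" where
  "is_OS q n m s \<longleftrightarrow> q_ary q s \<and> window_seq n m s \<and>
     (\<forall>i j. window s n i \<noteq> rev (window s n j))"

definition is_SOS :: "int \<Rightarrow> nat \<Rightarrow> nat \<Rightarrow> (nat \<Rightarrow> int) \<Rightarrow> bool" where
  "is_SOS q n m s \<longleftrightarrow> is_OS q n m s \<and>
     (\<forall>i j. window s n i \<noteq> neg_tuple q (rev (window s n j)))"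

definition weight_mod :: "int \<Rightarrow> nat \<Rightarrow> (nat \<Rightarrow> int) \<Rightarrow> int" where
  "weight_mod q m s = (\<Sum>i<m. s i) mod q"

definition cor_t :: "int \<Rightarrow> int \<Rightarrow> nat \<Rightarrow> (nat \<Rightarrow> int) \<Rightarrow> nat \<Rightarrow> int" where
  "cor_t q q' m s i =
     (if s i mod q' \<noteq> 0 then ((-1) ^ (i + m - 1) * s i) mod q'
      else ((-1) ^ (i + m - 1) * q) mod q')"

definition cor_U :: "int \<Rightarrow> int \<Rightarrow> nat \<Rightarrow> (nat \<Rightarrow> int) \<Rightarrow> nat \<Rightarrow> int" where
  "cor_U q q' m s i =
     (let j = i mod (4 * m); k = j mod m in
      if j < m then s k mod q'
      else if j < 2 * m then (- s k) mod q'
      else if j < 3 * m then cor_t q q' m s k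
      else (- cor_t q q' m s k) mod q')"

end

theory Submission
  imports Defs
begin

definition Tv :: "int \<Rightarrow> int \<Rightarrow> int \<Rightarrow> bool \<Rightarrow> int" where
  "Tv q q' a e = (if a \<noteq> 0 then (if e then a else q' - a) else (if e then q else q' - q))"

definition Wv :: "int \<Rightarrow> int \<Rightarrow> nat \<Rightarrow> int \<Rightarrow> bool \<Rightarrow> int" where
  "Wv q q' b a e = (if b = 0 then a else if b = 1 then (if a = 0 then 0 else q' - a)
      else if b = 2 then Tv q q' a e else q' - Tv q q' a e)"

definition psi :: "int \<Rightarrow> int \<Rightarrow> int \<Rightarrow> int" where
  "psi q q' v = (if v \<le> q then v else q' - v) mod q"

lemma cor_t_val:
  assumes "0 \<le> s i" "s i < q" "1 < q" "2 * q + 1 \<le> q'"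
  shows "cor_t q q' m s i = Tv q q' (s i) (even (i + m - 1))"
proof (cases "even (i + m - 1)")
  case True
  then show ?thesis using assms
    by (auto simp: cor_t_def Tv_def mod_pos_pos_trivial)
next
  case False
  then have "(-1::int) ^ (i + m - 1) = -1" by simp
  moreover have "(- s i) mod q' = q' - s i" if "s i \<noteq> 0"
    using assms that by (smt (verit) mod_add_self2 mod_pos_pos_trivial)
  moreover have "(- q) mod q' = q' - q"
    using assms by (smt (verit) mod_add_self2 mod_pos_pos_trivial)
  ultimately show ?thesis using assms False
    by (auto simp: cor_t_def Tv_def mod_pos_pos_trivial)
qed

lemma U_val:
  assumes "m > 0" "q_ary q s" "1 < q" "2 * q + 1 \<le> q'"
  shows "cor_U q q' m s x = Wv q q' ((x div m) mod 4) (s (x mod m)) (even (x mod m + m - 1))"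
proof -
  let ?c = "x mod m" and ?d = "(x div m) mod 4"
  have j: "x mod (4 * m) = m * ?d + ?c" using mod_mult2_eq[of x m 4] by (simp add: mult.commute)
  have jm: "x mod (4 * m) mod m = ?c" by (simp add: mod_mod_cancel)
  have d4: "?d < 4" by simp
  have c: "?c < m" using assms by simp
  have a: "0 \<le> s ?c" "s ?c < q" using assms(2) by (auto simp: q_ary_def)
  have ct: "cor_t q q' m s ?c = Tv q q' (s ?c) (even (?c + m - 1))"
    using cor_t_val a assms by blast
  have nt: "(- t) mod q' = q' - t" if "0 < t" "t < q'" for t :: int
    using that by (smt (verit) mod_add_self2 mod_pos_pos_trivial)
  have Tpos: "0 < Tv q q' (s ?c) e" "Tv q q' (s ?c) e < q'" for e
    using a assms by (auto simp: Tv_def)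
  have ns: "(- s ?c) mod q' = (if s ?c = 0 then 0 else q' - s ?c)"
    using a assms nt[of "s ?c"] by auto
  have ss: "s ?c mod q' = s ?c" using a assms by (simp add: mod_pos_pos_trivial)
  have "?d = 0 \<or> ?d = 1 \<or> ?d = 2 \<or> ?d = 3" using d4 by linarith
  then show ?thesis
  proof (elim disjE)
    assume d: "?d = 0"
    then have "x mod (4 * m) < m" using j c by simp
    then show ?thesis using d jm ss by (simp add: cor_U_def Let_def Wv_def)
  next
    assume d: "?d = 1"
    then have "m \<le> x mod (4 * m)" "x mod (4 * m) < 2 * m" using j c by simp_all
    then show ?thesis using d jm ns by (simp add: cor_U_def Let_def Wv_def)
  next
    assume d: "?d = 2"
    then have "2 * m \<le> x mod (4 * m)" "x mod (4 * m) < 3 * m" using j c by simp_all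
    then show ?thesis using d jm ct by (simp add: cor_U_def Let_def Wv_def)
  next
    assume d: "?d = 3"
    then have "3 * m \<le> x mod (4 * m)" using j c by simp_all
    then show ?thesis using d jm ct nt[OF Tpos] by (simp add: cor_U_def Let_def Wv_def)
  qed
qed

context
  fixes q q' :: int and a :: int and e :: bool
  assumes A: "0 \<le> a" "a < q" "1 < q" "2 * q + 1 \<le> q'"
begin

lemma W_shift1:
  assumes "b < 4" "Wv q q' b a e = Wv q q' ((b + 1) mod 4) a e"
  shows "(b = 0 \<and> a = 0) \<or> ((b = 1 \<or> b = 3) \<and> a \<noteq> 0 \<and> \<not> e)"
proof -
  have "b = 0 \<or> b = 1 \<or> b = 2 \<or> b = 3" using assms(1) by linarith
  then show ?thesis using assms A by (elim disjE) (auto simp: Wv_def Tv_def split: if_splits)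
qed

lemma W_shift2:
  assumes "b < 4" "Wv q q' b a e = Wv q q' ((b + 2) mod 4) a e"
  shows "a \<noteq> 0 \<and> e"
proof -
  have "b = 0 \<or> b = 1 \<or> b = 2 \<or> b = 3" using assms(1) by linarith
  then show ?thesis using assms A by (elim disjE) (auto simp: Wv_def Tv_def split: if_splits)
qed

lemma psi_W:
  assumes "b < 4"
  shows "psi q q' (Wv q q' b a e) = a" "psi q q' ((- Wv q q' b a e) mod q') = a"
proof -
  have nt: "(- t) mod q' = q' - t" if "0 < t" "t < q'" for t :: int
    using that by (smt (verit) mod_add_self2 mod_pos_pos_trivial)
  have b: "b = 0 \<or> b = 1 \<or> b = 2 \<or> b = 3" using assms(1) by linarith
  have am: "a mod q = a" using A by simp
  have qm: "q mod q = 0" by simp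
  have r: "Wv q q' b a e = 0 \<or> (1 \<le> Wv q q' b a e \<and> Wv q q' b a e \<le> q) \<or>
           (q' - q \<le> Wv q q' b a e \<and> Wv q q' b a e < q')"
    using b A by (auto simp: Wv_def Tv_def)
  show "psi q q' (Wv q q' b a e) = a"
    using b A am by (auto simp: Wv_def Tv_def psi_def)
  have "(- Wv q q' b a e) mod q' = (if Wv q q' b a e = 0 then 0 else q' - Wv q q' b a e)"
    using r A nt by auto
  then show "psi q q' ((- Wv q q' b a e) mod q') = a"
    using b A am by (auto simp: Wv_def Tv_def psi_def)
qed

lemma W_sum:
  "Wv q q' 0 a e + Wv q q' 1 a e + Wv q q' 2 a e + Wv q q' 3 a e = q' * (if a = 0 then 1 else 2)"
  using A by (auto simp: Wv_def Tv_def)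

end

context
  fixes q q' :: int and n m :: nat and s :: "nat \<Rightarrow> int"
  assumes H: "q' \<ge> 2 * q + 1" "q > 1" "n > 1" "is_OS q n m s" "s 0 = 0"
begin

lemma mpos: "m > 0" and sq: "q_ary q s" and sper: "periodic s m"
  using H(4) by (auto simp: is_OS_def window_seq_def periodic_def)

lemma s_mod: "s (x mod m) = s x"
proof -
  have "s (i + k * m) = s i" for i k
  proof (induction k)
    case (Suc k)
    have "i + Suc k * m = (i + k * m) + m" by simp
    then show ?case using sper Suc unfolding periodic_def by metis
  qed simp
  then show ?thesis by (metis mod_div_mult_eq)
qed

lemma s_range: "0 \<le> s x" "s x < q" using sq by (auto simp: q_ary_def)

abbreviation "U \<equiv> cor_U q q' m s"
abbreviation "dd x \<equiv> x div m mod 4"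
abbreviation "ee x \<equiv> even (x mod m + m - 1)"

lemma Ux: "U x = Wv q q' (dd x) (s (x mod m)) (ee x)"
  using U_val[OF mpos sq H(2)] H(1) by simp

lemma Uxm: "U (x + m) = Wv q q' ((dd x + 1) mod 4) (s (x mod m)) (ee x)"
proof -
  have "(x + m) div m = x div m + 1" "(x + m) mod m = x mod m" using mpos by (auto simp: div_add_self2)
  moreover have "(x div m + 1) mod 4 = (dd x + 1) mod 4" by (simp add: mod_Suc_eq)
  ultimately show ?thesis using Ux[of "x + m"] by simp
qed

lemma Ux2m: "U (x + 2 * m) = Wv q q' ((dd x + 2) mod 4) (s (x mod m)) (ee x)"
proof -
  have "(x + 2 * m) div m = x div m + 2" "(x + 2 * m) mod m = x mod m" using mpos by auto
  moreover have "(x div m + 2) mod 4 = (dd x + 2) mod 4" by (rule mod_add_left_eq[symmetric])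
  ultimately show ?thesis using Ux[of "x + 2 * m"] by simp
qed

lemma next_last: "x mod m = m - 1 \<Longrightarrow> (x + 1) mod m = 0 \<and> (x + 1) div m = x div m + 1"
  using mpos by (auto simp: mod_Suc div_Suc)

lemma next_mid: "x mod m \<noteq> m - 1 \<Longrightarrow> (x + 1) mod m = x mod m + 1 \<and> (x + 1) div m = x div m"
  using mpos by (auto simp: mod_Suc div_Suc)

lemma G1:
  fixes x :: nat
  assumes "U x = U (x + m)"
  shows "(dd x = 0 \<and> s x = 0) \<or> ((dd x = 1 \<or> dd x = 3) \<and> s x \<noteq> 0 \<and> \<not> ee x)"
proof -
  have "Wv q q' (dd x) (s (x mod m)) (ee x) = Wv q q' ((dd x + 1) mod 4) (s (x mod m)) (ee x)"
    using assms Ux Uxm by metis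
  from W_shift1[OF s_range(1) s_range(2) H(2) H(1) _ this]
  show ?thesis using s_mod by simp
qed

lemma G2:
  fixes x :: nat
  assumes "U x = U (x + 2 * m)"
  shows "s x \<noteq> 0 \<and> ee x"
proof -
  have "Wv q q' (dd x) (s (x mod m)) (ee x) = Wv q q' ((dd x + 2) mod 4) (s (x mod m)) (ee x)"
    using assms Ux Ux2m by metis
  from W_shift2[OF s_range(1) s_range(2) H(2) H(1) _ this]
  show ?thesis using s_mod by simp
qed

lemma ee_last: "(x::nat) mod m = m - 1 \<Longrightarrow> ee x"
proof -
  assume "x mod m = m - 1"
  then have "x mod m + m - 1 = 2 * (m - 1)" using mpos by simp
  then show ?thesis by simp
qed

lemma ee_mid: "(x::nat) mod m \<noteq> m - 1 \<Longrightarrow> ee (x + 1) \<longleftrightarrow> \<not> ee x"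
proof -
  assume a: "x mod m \<noteq> m - 1"
  then have "(x + 1) mod m + m - 1 = Suc (x mod m + m - 1)" using next_mid mpos by simp
  then show ?thesis by simp
qed

lemma step:
  fixes x :: nat
  assumes "U x = U (x + m)" "U (x + 1) = U (x + 1 + m)"
  shows "dd x = 0 \<and> s x = 0"
proof (rule ccontr)
  assume c: "\<not> (dd x = 0 \<and> s x = 0)"
  then have x: "(dd x = 1 \<or> dd x = 3) \<and> s x \<noteq> 0 \<and> \<not> ee x" using G1[OF assms(1)] by blast
  show False
  proof (cases "x mod m = m - 1")
    case True
    then show ?thesis using ee_last x by blast
  next
    case False
    then have "dd (x + 1) = dd x" "ee (x + 1) \<longleftrightarrow> \<not> ee x" using next_mid ee_mid by auto
    then show ?thesis using G1[OF assms(2)] x by auto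
  qed
qed

lemma endl:
  fixes x :: nat
  assumes "dd x = 0" "U (x + 1) = U (x + 1 + m)"
  shows "s (x + 1) = 0"
proof (cases "x mod m = m - 1")
  case True
  then have "(x + 1) mod m = 0" using next_last by blast
  then show ?thesis using s_mod[of "x + 1"] H(5) by simp
next
  case False
  then have "dd (x + 1) = dd x" using next_mid by auto
  then show ?thesis using G1[OF assms(2)] assms(1) by auto
qed

lemma shift1:
  fixes p :: nat
  assumes "\<forall>r<n. U (p + r) = U (p + m + r)"
  shows "\<forall>r<n. s (p + r) = 0"
proof (intro allI impI)
  fix r assume r: "r < n"
  have E: "U (p + k) = U (p + k + m)" if "k < n" for k
    using assms that by (metis add.assoc add.commute)
  show "s (p + r) = 0"
  proof (cases "r + 1 < n")
    case True
    have "U (p + r + 1) = U (p + r + 1 + m)" using E[OF True] by (simp add: add.assoc)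
    then show ?thesis using step E r by blast
  next
    case False
    then have r1: "r = (r - 1) + 1" "r - 1 < n" "r - 1 + 1 < n" using r H(3) by auto
    have a: "U (p + (r - 1) + 1) = U (p + (r - 1) + 1 + m)" using E[OF r1(3)] by (simp add: add.assoc)
    have "dd (p + (r - 1)) = 0" using step[OF E[OF r1(2)] a] by blast
    from endl[OF this a] show ?thesis using r1(1) by (metis add.assoc)
  qed
qed

lemma shift2:
  fixes p :: nat
  assumes "\<forall>r<n. U (p + r) = U (p + 2 * m + r)"
  shows False
proof -
  have a: "U p = U (p + 2 * m)" using assms H(3) by (metis add.right_neutral gr_implies_not0 neq0_conv)
  have b: "U (p + 1) = U (p + 1 + 2 * m)" using assms H(3) by (metis add.assoc add.commute)
  note ga = G2[OF a] and gb = G2[OF b]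
  show False
  proof (cases "p mod m = m - 1")
    case True
    then have "(p + 1) mod m = 0" using next_last by blast
    then show ?thesis using s_mod[of "p + 1"] H(5) gb by simp
  next
    case False
    then show ?thesis using ee_mid ga gb by blast
  qed
qed

lemma Umod: "U x = U (x mod (4 * m))"
  by (simp add: cor_U_def)

lemma Ushift: "x mod (4 * m) = y mod (4 * m) \<Longrightarrow> U (x + r) = U (y + r)"
  using Umod[of "x + r"] Umod[of "y + r"] by (metis mod_add_left_eq)

lemma win_eq: "window f k i = window f k j \<longleftrightarrow> (\<forall>r<k. f (i + r) = f (j + r))"
  by (auto simp: window_def list_eq_iff_nth_eq)

lemma zero_contra:
  assumes "\<forall>r<n. s (p + r) = 0"
  shows False
proof -
  have z: "s (p + n - Suc i) = 0" if "i < n" for i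
  proof -
    have e: "p + n - Suc i = p + (n - Suc i)" using that by simp
    have "n - Suc i < n" using that by simp
    then have "s (p + (n - Suc i)) = 0" using assms by blast
    then show ?thesis by (simp only: e)
  qed
  have "window s n p = rev (window s n p)"
    using z assms by (auto simp: window_def list_eq_iff_nth_eq rev_nth)
  then show False using H(4) by (auto simp: is_OS_def)
qed

lemma psi_U: "psi q q' (U x) = s x" "psi q q' ((- U x) mod q') = s x"
proof -
  have d: "dd x < 4" by simp
  show "psi q q' (U x) = s x"
    using psi_W(1)[OF s_range(1) s_range(2) H(2) H(1) d] Ux s_mod by simp
  show "psi q q' ((- U x) mod q') = s x"
    using psi_W(2)[OF s_range(1) s_range(2) H(2) H(1) d] Ux s_mod by simp
qed

lemma map_psi: "map (psi q q') (window U k i) = window s k i"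
  by (simp add: window_def psi_U)

lemma map_psi_neg: "map (psi q q') (neg_tuple q' (rev (window U k i))) = rev (window s k i)"
  by (simp add: window_def psi_U neg_tuple_def rev_map)

lemma core:
  assumes "a < 4 * m" "b < 4 * m" "a mod m = b mod m" "a \<le> b"
    and W: "\<forall>r<n. U (a + r) = U (b + r)"
  shows "a = b"
proof (rule ccontr)
  assume ne: "a \<noteq> b"
  have "m dvd b - a" using assms(3,4) mod_eq_dvd_iff_nat[of a b m] by simp
  then obtain k where k: "b - a = m * k" by blast
  have "k < 4" using k assms(1,2) mpos
    by (metis diff_le_self le_less_trans mult.commute mult_less_cancel2)
  moreover have "k \<noteq> 0"
  proof
    assume "k = 0"
    then have "b - a = 0" using k by simp
    then show False using ne assms(4) by simp
  qed
  ultimately have "k = 1 \<or> k = 2 \<or> k = 3" by linarith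
  then show False
  proof (elim disjE)
    assume "k = 1"
    then have "b = a + m" using k assms(4) by simp
    then show False using shift1[of a] W zero_contra by auto
  next
    assume "k = 2"
    then have "b = a + 2 * m" using k assms(4) by simp
    then show False using shift2[of a] W by auto
  next
    assume "k = 3"
    then have b: "b = a + 3 * m" using k assms(4) by simp
    have "\<forall>r<n. U (b + r) = U (b + m + r)"
    proof (intro allI impI)
      fix r assume "r < n"
      have "(b + m) mod (4 * m) = a mod (4 * m)" using b by simp
      then have "U (b + m + r) = U (a + r)" by (rule Ushift)
      then show "U (b + r) = U (b + m + r)" using W \<open>r < n\<close> by simp
    qed
    then show False using shift1[of b] zero_contra by auto
  qed
qed

lemma winseq: "window_seq n (4 * m) U"
  unfolding window_seq_def
proof (intro conjI allI impI)
  have "U (i + 4 * m) = U i" for i using Umod[of "i + 4 * m"] Umod[of i] by simp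
  then show "periodic U (4 * m)" using mpos by (auto simp: periodic_def)
  fix i j assume W: "window U n i = window U n j"
  have "window s n i = map (psi q q') (window U n i)" by (simp only: map_psi)
  also have "\<dots> = map (psi q q') (window U n j)" by (simp only: W)
  also have "\<dots> = window s n j" by (simp only: map_psi)
  finally have "window s n i = window s n j" .
  then have ij: "i mod m = j mod m" using H(4) unfolding is_OS_def window_seq_def by blast
  define a where "a = i mod (4 * m)"
  define b where "b = j mod (4 * m)"
  have ab: "a < 4 * m" "b < 4 * m" using mpos by (auto simp: a_def b_def)
  have abm: "a mod m = b mod m" using ij by (simp add: a_def b_def mod_mod_cancel)
  have W': "\<forall>r<n. U (i + r) = U (j + r)" using W unfolding win_eq .
  have Wab: "\<forall>r<n. U (a + r) = U (b + r)"
  proof (intro allI impI)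
    fix r assume "r < n"
    then have "U (i + r) = U (j + r)" using W' by blast
    moreover have "U (i + r) = U (a + r)" by (rule Ushift) (simp add: a_def)
    moreover have "U (j + r) = U (b + r)" by (rule Ushift) (simp add: b_def)
    ultimately show "U (a + r) = U (b + r)" by simp
  qed
  have "a = b"
  proof (cases "a \<le> b")
    case True
    show ?thesis using core[OF ab abm True Wab] .
  next
    case False
    have Wba: "\<forall>r<n. U (b + r) = U (a + r)" using Wab by simp
    from False have "b \<le> a" by simp
    from core[OF ab(2) ab(1) abm[symmetric] this Wba] show ?thesis by simp
  qed
  then show "i mod (4 * m) = j mod (4 * m)" by (simp add: a_def b_def)
qed

lemma qary: "q_ary q' U"
proof -
  have "q' > 0" using H(1,2) by simp
  then show ?thesis by (auto simp: q_ary_def cor_U_def cor_t_def Let_def)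
qed

lemma sum4: "(\<Sum>i<4 * k. f i) = (\<Sum>i<k. f i + f (i + k) + f (i + 2 * k) + f (i + 3 * k))"
  for f :: "nat \<Rightarrow> int" and k :: nat
proof -
  have "(\<Sum>i<4 * k. f i) = sum f {0..<k} + sum f {k..<2*k} + sum f {2*k..<3*k} + sum f {3*k..<4*k}"
    by (simp add: sum.atLeastLessThan_concat atLeast0LessThan[symmetric])
  also have "\<dots> = (\<Sum>i<k. f i) + (\<Sum>i<k. f (i + k)) + (\<Sum>i<k. f (i + 2 * k)) + (\<Sum>i<k. f (i + 3 * k))"
  proof -
    have sh: "sum f {j * k..<(j + 1) * k} = (\<Sum>i<k. f (i + j * k))" for j :: nat
    proof -
      have "{j * k..<(j + 1) * k} = {0 + j * k..<k + j * k}" by (simp add: algebra_simps)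
      then show ?thesis by (simp only: sum.shift_bounds_nat_ivl atLeast0LessThan)
    qed
    have "sum f {k..<2 * k} = (\<Sum>i<k. f (i + k))" using sh[of 1] by (simp add: mult_2)
    then show ?thesis using sh[of 2] sh[of 3] by (simp add: atLeast0LessThan)
  qed
  finally show ?thesis by (simp add: sum.distrib)
qed

lemma weight: "weight_mod q' (4 * m) U = 0"
proof -
  have blk: "U (c + k * m) = Wv q q' k (s c) (even (c + m - 1))" if "c < m" "k < 4" for c k
  proof -
    have "(c + k * m) div m = k" "(c + k * m) mod m = c" using that mpos by auto
    then show ?thesis using Ux[of "c + k * m"] that by simp
  qed
  have "U c + U (c + m) + U (c + 2 * m) + U (c + 3 * m) = q' * (if s c = 0 then 1 else 2)"
    if "c < m" for c
    using blk[OF that, of 0] blk[OF that, of 1] blk[OF that, of 2] blk[OF that, of 3]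
      W_sum[OF s_range(1) s_range(2) H(2) H(1), of c "even (c + m - 1)"] by simp
  then have "(\<Sum>i<4 * m. U i) = (\<Sum>c<m. q' * (if s c = 0 then 1 else 2))"
    unfolding sum4 by (intro sum.cong) auto
  also have "\<dots> = q' * (\<Sum>c<m. (if s c = 0 then 1 else 2))" by (simp add: sum_distrib_left)
  finally show ?thesis by (simp add: weight_mod_def)
qed

end

theorem corollary3p18:
  fixes q q' :: int and n m :: nat and s :: "nat \<Rightarrow> int"
  assumes "q' \<ge> 2 * q + 1" and "q > 1" and "n > 1"
    and "is_OS q n m s" and "s 0 = 0"
  shows "is_SOS q' n (4 * m) (cor_U q q' m s) \<and> weight_mod q' (4 * m) (cor_U q q' m s) = 0"
proof -
  note W = winseq[OF assms] and Q = qary[OF assms]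
  have R: "window (cor_U q q' m s) n i \<noteq> rev (window (cor_U q q' m s) n j)" for i j
  proof
    assume "window (cor_U q q' m s) n i = rev (window (cor_U q q' m s) n j)"
    then have "map (psi q q') (window (cor_U q q' m s) n i) = rev (map (psi q q') (window (cor_U q q' m s) n j))"
      by (simp add: rev_map)
    then have "window s n i = rev (window s n j)" using map_psi[OF assms] by metis
    then show False using assms(4) by (auto simp: is_OS_def)
  qed
  have N: "window (cor_U q q' m s) n i \<noteq> neg_tuple q' (rev (window (cor_U q q' m s) n j))" for i j
  proof
    assume "window (cor_U q q' m s) n i = neg_tuple q' (rev (window (cor_U q q' m s) n j))"
    then have "map (psi q q') (window (cor_U q q' m s) n i) = map (psi q q') (neg_tuple q' (rev (window (cor_U q q' m s) n j)))"
      by simp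
    then have "window s n i = rev (window s n j)" using map_psi[OF assms] map_psi_neg[OF assms] by metis
    then show False using assms(4) by (auto simp: is_OS_def)
  qed
  show ?thesis using W Q R N weight[OF assms] by (auto simp: is_SOS_def is_OS_def)
qed

end
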